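(* In any finite ELP, for any policy $\pi$ (the conjugate policy), $Q^*\in\arg\min_{Q\in\mathcal Q}\max_{\lambda\ge0}\mathcal L_\pi(Q,\lambda)$. Equivalently, $Q^*$ is an optimal solution of the problem: minimize $\mathbb E_\pi[Q(S_T,A_T)]$ over $Q\in\mathcal Q$ subject to $Q(s,a)\ge\mathcal BQ(s,a)$ for all $(s,a)$.
   Context: A finite ELP is $(\mathcal S,\mathcal A,P,R,\rho)$ with finite $\mathcal S,\mathcal A$, reward $R:\mathcal S\to\mathbb R$, transitions $P(s'|s,a)$, distribution $\rho$, and nonempty terminal set $\mathcal S_\bot$. Under a policy $\pi$, $S_0$ is a fixed terminal state, $A_t\sim\pi(\cdot|S_t)$, $S_{t+1}\sim P(\cdot|S_t,A_t)$, and $T=\inf\{t\ge1:S_t\in\mathcal S_\bot\}$. ELP conditions: $\mathbb E_\pi[T]<\infty$ for every $\pi$; $P(s'|s,a)=\rho(s')$ for all $s\in\mathcal S_\bot$, all $a,s'$; every state is reachable under some policy. $\mathcal Q$ = all functions $\mathcal S\times\mathcal A\to\mathbb R$. $\gamma_{\mathrm{epi}}(s)=\mathbf 1[s\notin\mathcal S_\bot]$; the Bellman operator is $\mathcal BQ(s,a)=\sum_{s'}P(s'|s,a)\big(R(s')+\gamma_{\mathrm{epi}}(s')\max_{a'}Q(s',a')\big)$, and $Q^*$ is its unique fixed point. For a policy $\pi$, the Lagrangian is $\mathcal L_\pi(Q,\lambda)=\mathbb E_\pi[Q(S_T,A_T)]+\sum_{s,a}\lambda(s,a)\big(\mathcal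 BQ(s,a)-Q(s,a)\big)$ for $Q\in\mathcal Q$ and $\lambda:\mathcal S\times\mathcal A\to[0,\infty)$ (written $\lambda\ge0$), where $A_T\sim\pi(\cdot|S_T)$. *)

theory Defs
  imports Complex_Main "HOL-Library.Extended_Real"
begin

text \<open>P s a s' = P(s'|s,a), R : reward, rho : reset distribution, Term : terminal set,
  s0 : the fixed terminal start state. Policies are stochastic maps \<pi> s a = \<pi>(a|s).\<close>

definition is_dist :: "('b::finite \<Rightarrow> real) \<Rightarrow> bool" where
  "is_dist d \<longleftrightarrow> (\<forall>x. d x \<ge> 0) \<and> (\<Sum>x\<in>UNIV. d x) = 1"

definition is_policy :: "('s::finite \<Rightarrow> 'a::finite \<Rightarrow> real) \<Rightarrow> bool" where
  "is_policy \<pi> \<longleftrightarrow> (\<forall>s. is_dist (\<pi> s))"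

definition kernel :: "('s::finite \<Rightarrow> 'a::finite \<Rightarrow> 's \<Rightarrow> real) \<Rightarrow> ('s \<Rightarrow> 'a \<Rightarrow> real) \<Rightarrow> 's \<Rightarrow> 's \<Rightarrow> real" where
  "kernel P \<pi> s s' = (\<Sum>a\<in>UNIV. \<pi> s a * P s a s')"

fun state_dist :: "('s::finite \<Rightarrow> 'a::finite \<Rightarrow> 's \<Rightarrow> real) \<Rightarrow> ('s \<Rightarrow> 'a \<Rightarrow> real) \<Rightarrow> 's \<Rightarrow> nat \<Rightarrow> 's \<Rightarrow> real" where
  "state_dist P \<pi> s0 0 s = (if s = s0 then 1 else 0)"
| "state_dist P \<pi> s0 (Suc n) s' = (\<Sum>s\<in>UNIV. state_dist P \<pi> s0 n s * kernel P \<pi> s s')"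

text \<open>survive P pi Term s0 n s = Pr(S_n = s and T > n), where T = inf {t \<ge> 1. S_t \<in> Term}.\<close>
fun survive :: "('s::finite \<Rightarrow> 'a::finite \<Rightarrow> 's \<Rightarrow> real) \<Rightarrow> ('s \<Rightarrow> 'a \<Rightarrow> real) \<Rightarrow> 's set \<Rightarrow> 's \<Rightarrow> nat \<Rightarrow> 's \<Rightarrow> real" where
  "survive P \<pi> Term s0 0 s = (if s = s0 then 1 else 0)"
| "survive P \<pi> Term s0 (Suc n) s' =
     (if s' \<in> Term then 0 else (\<Sum>s\<in>UNIV. survive P \<pi> Term s0 n s * kernel P \<pi> s s'))"

text \<open>hit P pi Term s0 n s' = Pr(T = n+1 and S_T = s').\<close>
definition hit :: "('s::finite \<Rightarrow> 'a::finite \<Rightarrow> 's \<Rightarrow> real) \<Rightarrow> ('s \<Rightarrow> 'a \<Rightarrow> real) \<Rightarrow> 's set \<Rightarrow> 's \<Rightarrow> nat \<Rightarrow> 's \<Rightarrow> real" where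
  "hit P \<pi> Term s0 n s' =
     (if s' \<in> Term then (\<Sum>s\<in>UNIV. survive P \<pi> Term s0 n s * kernel P \<pi> s s') else 0)"

definition exit_dist :: "('s::finite \<Rightarrow> 'a::finite \<Rightarrow> 's \<Rightarrow> real) \<Rightarrow> ('s \<Rightarrow> 'a \<Rightarrow> real) \<Rightarrow> 's set \<Rightarrow> 's \<Rightarrow> 's \<Rightarrow> real" where
  "exit_dist P \<pi> Term s0 s = (\<Sum>n. hit P \<pi> Term s0 n s)"

text \<open>E_pi[T] < infinity, using E[T] = sum_{n \<ge> 0} Pr(T > n).\<close>
definition finite_expected_T :: "('s::finite \<Rightarrow> 'a::finite \<Rightarrow> 's \<Rightarrow> real) \<Rightarrow> ('s \<Rightarrow> 'a \<Rightarrow> real) \<Rightarrow> 's set \<Rightarrow> 's \<Rightarrow> bool" where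
  "finite_expected_T P \<pi> Term s0 \<longleftrightarrow> summable (\<lambda>n. \<Sum>s\<in>UNIV. survive P \<pi> Term s0 n s)"

definition is_ELP :: "('s::finite \<Rightarrow> 'a::finite \<Rightarrow> 's \<Rightarrow> real) \<Rightarrow> ('s \<Rightarrow> real) \<Rightarrow> 's set \<Rightarrow> 's \<Rightarrow> bool" where
  "is_ELP P rho Term s0 \<longleftrightarrow>
     (\<forall>s a. is_dist (P s a)) \<and> is_dist rho \<and> Term \<noteq> {} \<and> s0 \<in> Term \<and>
     (\<forall>\<pi>. is_policy \<pi> \<longrightarrow> finite_expected_T P \<pi> Term s0) \<and>
     (\<forall>s\<in>Term. \<forall>a s'. P s a s' = rho s') \<and>
     (\<forall>s. \<exists>\<pi> n. is_policy \<pi> \<and> state_dist P \<pi> s0 n s > 0)"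

definition gamma_epi :: "'s set \<Rightarrow> 's \<Rightarrow> real" where
  "gamma_epi Term s = (if s \<in> Term then 0 else 1)"

definition bellman :: "('s::finite \<Rightarrow> 'a::finite \<Rightarrow> 's \<Rightarrow> real) \<Rightarrow> ('s \<Rightarrow> real) \<Rightarrow> 's set
    \<Rightarrow> ('s \<Rightarrow> 'a \<Rightarrow> real) \<Rightarrow> 's \<Rightarrow> 'a \<Rightarrow> real" where
  "bellman P R Term Q s a =
     (\<Sum>s'\<in>UNIV. P s a s' * (R s' + gamma_epi Term s' * Max (range (Q s'))))"

text \<open>E_pi[Q(S_T, A_T)] with A_T ~ pi(.|S_T).\<close>
definition exit_value :: "('s::finite \<Rightarrow> 'a::finite \<Rightarrow> 's \<Rightarrow> real) \<Rightarrow> ('s \<Rightarrow> 'a \<Rightarrow> real) \<Rightarrow> 's set \<Rightarrow> 's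
    \<Rightarrow> ('s \<Rightarrow> 'a \<Rightarrow> real) \<Rightarrow> real" where
  "exit_value P \<pi> Term s0 Q = (\<Sum>s\<in>UNIV. exit_dist P \<pi> Term s0 s * (\<Sum>a\<in>UNIV. \<pi> s a * Q s a))"

definition lagrangian :: "('s::finite \<Rightarrow> 'a::finite \<Rightarrow> 's \<Rightarrow> real) \<Rightarrow> ('s \<Rightarrow> real) \<Rightarrow> 's set \<Rightarrow> 's
    \<Rightarrow> ('s \<Rightarrow> 'a \<Rightarrow> real) \<Rightarrow> ('s \<Rightarrow> 'a \<Rightarrow> real) \<Rightarrow> ('s \<Rightarrow> 'a \<Rightarrow> real) \<Rightarrow> real" where
  "lagrangian P R Term s0 \<pi> Q lam =
     exit_value P \<pi> Term s0 Q + (\<Sum>s\<in>UNIV. \<Sum>a\<in>UNIV. lam s a * (bellman P R Term Q s a - Q s a))"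

definition max_lagrangian :: "('s::finite \<Rightarrow> 'a::finite \<Rightarrow> 's \<Rightarrow> real) \<Rightarrow> ('s \<Rightarrow> real) \<Rightarrow> 's set \<Rightarrow> 's
    \<Rightarrow> ('s \<Rightarrow> 'a \<Rightarrow> real) \<Rightarrow> ('s \<Rightarrow> 'a \<Rightarrow> real) \<Rightarrow> ereal" where
  "max_lagrangian P R Term s0 \<pi> Q =
     (SUP lam\<in>{lam. \<forall>s a. lam s a \<ge> 0}. ereal (lagrangian P R Term s0 \<pi> Q lam))"

end

theory Submission
  imports Defs
begin

lemma if01_mult: "(if c then (1::real) else 0) * x = (if c then x else 0)" by simp

lemma dist_le1: assumes "is_dist (d::'b::finite \<Rightarrow> real)" shows "d x \<le> 1"
  using assms member_le_sum[of x UNIV d] unfolding is_dist_def by auto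

lemma kernel_nonneg:
  assumes "\<forall>s a. is_dist (P s a)" "is_policy \<pi>"
  shows "kernel P \<pi> s s' \<ge> 0"
  using assms unfolding kernel_def is_policy_def is_dist_def
  by (intro sum_nonneg mult_nonneg_nonneg) auto

lemma kernel_le1:
  assumes "\<forall>s a. is_dist (P s a)" "is_policy \<pi>"
  shows "kernel P \<pi> s s' \<le> 1"
proof -
  have "kernel P \<pi> s s' \<le> (\<Sum>a\<in>UNIV. \<pi> s a * 1)"
    unfolding kernel_def
    using assms dist_le1[of "P s _"] unfolding is_policy_def
    by (intro sum_mono mult_left_mono) (auto simp: is_dist_def)
  also have "\<dots> = 1" using assms unfolding is_policy_def is_dist_def by simp
  finally show ?thesis .
qed

lemma kernel_term:
  assumes "is_policy \<pi>" "\<forall>s\<in>Term. \<forall>a s'. P s a s' = rho s'" "s \<in> Term"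
  shows "kernel P \<pi> s s' = rho s'"
proof -
  have "kernel P \<pi> s s' = (\<Sum>a\<in>UNIV. \<pi> s a) * rho s'"
    unfolding kernel_def using assms by (simp add: sum_distrib_right)
  then show ?thesis using assms unfolding is_policy_def is_dist_def by simp
qed

lemma survive_nonneg:
  assumes "\<forall>s a. is_dist (P s a)" "is_policy \<pi>"
  shows "survive P \<pi> Term s0 n s \<ge> 0"
  by (induction n arbitrary: s) (auto intro!: sum_nonneg mult_nonneg_nonneg kernel_nonneg[OF assms])

lemma state_dist_nonneg:
  assumes "\<forall>s a. is_dist (P s a)" "is_policy \<pi>"
  shows "state_dist P \<pi> s0 n s \<ge> 0"
  by (induction n arbitrary: s) (auto intro!: sum_nonneg mult_nonneg_nonneg kernel_nonneg[OF assms])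

lemma hit_nonneg:
  assumes "\<forall>s a. is_dist (P s a)" "is_policy \<pi>"
  shows "hit P \<pi> Term s0 n s \<ge> 0"
  unfolding hit_def
  by (auto intro!: sum_nonneg mult_nonneg_nonneg kernel_nonneg[OF assms] survive_nonneg[OF assms])

lemma hit_le:
  assumes "\<forall>s a. is_dist (P s a)" "is_policy \<pi>"
  shows "hit P \<pi> Term s0 n s' \<le> (\<Sum>s\<in>UNIV. survive P \<pi> Term s0 n s)"
  unfolding hit_def
  using survive_nonneg[OF assms] kernel_le1[OF assms] kernel_nonneg[OF assms]
  by (auto intro!: sum_mono sum_nonneg mult_right_le_one_le)

lemma exit_dist_nonneg:
  assumes elp: "is_ELP P rho Term s0" and pol: "is_policy \<pi>"
  shows "exit_dist P \<pi> Term s0 s \<ge> 0"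
proof -
  have Pd: "\<forall>s a. is_dist (P s a)" using elp unfolding is_ELP_def by auto
  have sm: "summable (\<lambda>n. \<Sum>s\<in>UNIV. survive P \<pi> Term s0 n s)"
    using elp pol unfolding is_ELP_def finite_expected_T_def by auto
  have "summable (\<lambda>n. hit P \<pi> Term s0 n s)"
    by (rule summable_comparison_test[OF _ sm])
       (use hit_nonneg[OF Pd pol] hit_le[OF Pd pol] in auto)
  then show ?thesis unfolding exit_dist_def
    by (intro suminf_nonneg) (use hit_nonneg[OF Pd pol] in auto)
qed

lemma Qstar_le:
  fixes P :: "'s::finite \<Rightarrow> 'a::finite \<Rightarrow> 's \<Rightarrow> real"
  assumes elp: "is_ELP P rho Term s0"
    and fixpt: "bellman P R Term Qstar = Qstar"
    and feas: "\<forall>s a. Q s a \<ge> bellman P R Term Q s a"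
  shows "Qstar s a \<le> Q s a"
proof -
  from elp have Pd: "\<forall>s a. is_dist (P s a)" and s0T: "s0 \<in> Term"
    and fin: "\<forall>\<pi>. is_policy \<pi> \<longrightarrow> finite_expected_T P \<pi> Term s0"
    and reach: "\<forall>s. \<exists>\<pi> n. is_policy \<pi> \<and> state_dist P \<pi> s0 n s > 0"
    and Tr: "\<forall>s\<in>Term. \<forall>a s'. P s a s' = rho s'"
    unfolding is_ELP_def by auto
  have Pnn: "P s a s' \<ge> 0" for s a s' using Pd unfolding is_dist_def by auto
  have Psum: "(\<Sum>s'\<in>UNIV. P s a s') = 1" for s a using Pd unfolding is_dist_def by auto
  define g where "g s = (SOME a. Qstar s a = Max (range (Qstar s)))" for s
  have gmax: "Qstar s (g s) = Max (range (Qstar s))" for s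
  proof -
    have "Max (range (Qstar s)) \<in> range (Qstar s)" by (intro Max_in) auto
    then obtain a where "Qstar s a = Max (range (Qstar s))" by (metis imageE)
    then show ?thesis unfolding g_def by (rule someI)
  qed
  define D where "D s a = Q s a - Qstar s a" for s a
  define d where "d s = D s (g s)" for s
  have gam: "gamma_epi Term s \<ge> 0" for s unfolding gamma_epi_def by auto
  have Dineq: "D s a \<ge> (\<Sum>s'\<in>UNIV. P s a s' * (gamma_epi Term s' * d s'))" for s a
  proof -
    have "(\<Sum>s'\<in>UNIV. P s a s' * (R s' + gamma_epi Term s' * Q s' (g s'))) \<le> bellman P R Term Q s a"
      unfolding bellman_def
      by (intro sum_mono mult_left_mono add_left_mono mult_left_mono[OF _ gam] Pnn Max_ge) auto
    with feas have h1: "Q s a \<ge> (\<Sum>s'\<in>UNIV. P s a s' * (R s' + gamma_epi Term s' * Q s' (g s')))"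
      by (meson order_trans)
    have h2: "Qstar s a = (\<Sum>s'\<in>UNIV. P s a s' * (R s' + gamma_epi Term s' * Qstar s' (g s')))"
      using fun_cong[OF fun_cong[OF fixpt, of s], of a] unfolding bellman_def gmax by simp
    have "(\<Sum>s'\<in>UNIV. P s a s' * (R s' + gamma_epi Term s' * Q s' (g s')))
       - (\<Sum>s'\<in>UNIV. P s a s' * (R s' + gamma_epi Term s' * Qstar s' (g s')))
       = (\<Sum>s'\<in>UNIV. P s a s' * (gamma_epi Term s' * d s'))"
      unfolding sum_subtractf[symmetric] d_def D_def by (intro sum.cong) (auto simp: algebra_simps)
    then show ?thesis using h1 h2 unfolding D_def by linarith
  qed
  define m where "m = Min (range (\<lambda>(s,a). D s a))"
  have mle: "m \<le> D s a" for s a unfolding m_def by (rule Min_le) auto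
  have "m \<in> range (\<lambda>(s,a). D s a)" unfolding m_def by (intro Min_in) auto
  then obtain s1 a1 where s1: "D s1 a1 = m" by auto
  have "m \<ge> 0"
  proof (rule ccontr)
    assume "\<not> m \<ge> 0" hence mneg: "m < 0" by simp
    have key: "P s a s' > 0 \<Longrightarrow> s' \<notin> Term \<and> d s' = m" if Dm: "D s a = m" for s a s'
    proof -
      define f where "f x = P s a x * (gamma_epi Term x * d x - m)" for x
      have fnn: "f x \<ge> 0" for x
        unfolding f_def using mneg mle[of x "g x"] Pnn[of s a x]
        by (intro mult_nonneg_nonneg) (auto simp: gamma_epi_def d_def)
      have "(\<Sum>x\<in>UNIV. f x) = (\<Sum>x\<in>UNIV. P s a x * (gamma_epi Term x * d x)) - m * (\<Sum>x\<in>UNIV. P s a x)"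
        unfolding f_def sum_distrib_left sum_subtractf[symmetric] by (intro sum.cong) (auto simp: algebra_simps)
      also have "\<dots> \<le> 0" using Dineq[of s a] Dm Psum[of s a] by simp
      finally have "(\<Sum>x\<in>UNIV. f x) = 0" using fnn by (meson antisym sum_nonneg)
      then have "f s' = 0" using fnn by (simp add: sum_nonneg_eq_0_iff)
      moreover assume "P s a s' > 0"
      ultimately have "gamma_epi Term s' * d s' = m" unfolding f_def by simp
      then show ?thesis using mneg by (auto simp: gamma_epi_def split: if_splits)
    qed
    define M where "M = {s. s \<notin> Term \<and> d s = m}"
    obtain sM where sM: "sM \<in> M"
    proof -
      have "\<exists>x. P s1 a1 x > 0"
      proof (rule ccontr)
        assume "\<not> ?thesis"
        then have "(\<Sum>x\<in>UNIV. P s1 a1 x) \<le> 0" by (intro sum_nonpos) (simp add: not_less)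
        then show False using Psum[of s1 a1] by simp
      qed
      then obtain x where "P s1 a1 x > 0" by auto
      then have "x \<in> M" using key[OF s1] unfolding M_def by auto
      then show ?thesis using that by auto
    qed
    have closed: "s \<in> M \<Longrightarrow> P s (g s) s' > 0 \<Longrightarrow> s' \<in> M" for s s'
      using key[of s "g s" s'] unfolding M_def d_def by auto
    have MT: "s \<in> M \<Longrightarrow> s \<notin> Term" for s unfolding M_def by auto
    obtain \<pi>' n0 where pol': "is_policy \<pi>'" and sd: "state_dist P \<pi>' s0 n0 sM > 0"
      using reach by blast
    define h where "h s a = (if s \<in> M then (if a = g s then 1 else 0) else \<pi>' s a)" for s a
    have polh: "is_policy h"
      unfolding is_policy_def is_dist_def
    proof (intro allI conjI)
      fix s show "(\<Sum>a\<in>UNIV. h s a) = 1"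
        using pol' unfolding is_policy_def is_dist_def h_def by (cases "s \<in> M") auto
      fix a show "h s a \<ge> 0"
        using pol' unfolding is_policy_def is_dist_def h_def by auto
    qed
    have kh_M: "kernel P h s s' = P s (g s) s'" if "s \<in> M" for s s'
    proof -
      have "kernel P h s s' = (\<Sum>a\<in>UNIV. if a = g s then P s a s' else 0)"
        using that unfolding kernel_def h_def by (intro sum.cong) auto
      then show ?thesis by simp
    qed
    have kh_nM: "kernel P h s s' = kernel P \<pi>' s s'" if "s \<notin> M" for s s'
      using that unfolding kernel_def h_def by simp
    define u where "u N = (\<Sum>s\<in>M. survive P h Term s0 N s)" for N
    have snn: "survive P h Term s0 N x \<ge> 0" for N x by (rule survive_nonneg[OF Pd polh])
    have khnn: "kernel P h x y \<ge> 0" for x y by (rule kernel_nonneg[OF Pd polh])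
    have uge: "u N \<ge> survive P h Term s0 N s" if "s \<in> M" for N s
      unfolding u_def using that snn by (intro member_le_sum) auto
    have inv: "state_dist P \<pi>' s0 n s' > 0 \<Longrightarrow>
        s' \<in> Term \<or> (\<exists>N. survive P h Term s0 N s' > 0) \<or> (\<exists>N. u N > 0)" for n s'
    proof (induction n arbitrary: s')
      case 0
      then show ?case using s0T by (auto split: if_splits)
    next
      case (Suc n)
      show ?case
      proof (cases "s' \<in> Term")
        case True then show ?thesis by simp
      next
        case s'T: False
        have "\<exists>s. state_dist P \<pi>' s0 n s * kernel P \<pi>' s s' > 0"
        proof (rule ccontr)
          assume "\<not> ?thesis"
          then have "(\<Sum>s\<in>UNIV. state_dist P \<pi>' s0 n s * kernel P \<pi>' s s') \<le> 0"
            by (intro sum_nonpos) (simp add: not_less)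
          then show False using Suc.prems by simp
        qed
        then obtain s where prod: "state_dist P \<pi>' s0 n s * kernel P \<pi>' s s' > 0" by auto
        have sdp: "state_dist P \<pi>' s0 n s > 0" and kp: "kernel P \<pi>' s s' > 0"
          using prod state_dist_nonneg[OF Pd pol', of s0 n s] kernel_nonneg[OF Pd pol', of s s']
          by (auto simp: zero_less_mult_iff)
        from Suc.IH[OF sdp] consider "s \<in> Term" | N where "survive P h Term s0 N s > 0" | "\<exists>N. u N > 0"
          by blast
        then show ?thesis
        proof cases
          case 1
          have "kernel P \<pi>' s s' = rho s'" by (rule kernel_term[OF pol' Tr 1])
          moreover have "survive P h Term s0 (Suc 0) s' = kernel P h s0 s'"
            using s'T by (simp add: if01_mult)
          moreover have "kernel P h s0 s' = rho s'" by (rule kernel_term[OF polh Tr s0T])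
          ultimately show ?thesis using kp by (metis)
        next
          case (2 N)
          show ?thesis
          proof (cases "s \<in> M")
            case True
            then have "u N > 0" using uge[OF True, of N] 2 by linarith
            then show ?thesis by blast
          next
            case False
            have "survive P h Term s0 N s * kernel P h s s' \<le> survive P h Term s0 (Suc N) s'"
              using s'T snn khnn by (simp, intro member_le_sum) auto
            moreover have "survive P h Term s0 N s * kernel P h s s' > 0"
              using 2 kp kh_nM[OF False] by simp
            ultimately have "survive P h Term s0 (Suc N) s' > 0" by linarith
            then show ?thesis by blast
          qed
        next
          case 3 then show ?thesis by simp
        qed
      qed
    qed
    have "\<exists>N. u N > 0"
      using inv[OF sd] MT[OF sM] uge[OF sM] by (meson less_le_trans)
    then obtain N where uN: "u N > 0" by blast
    have umono: "u n \<le> u (Suc n)" for n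
    proof -
      have "u (Suc n) = (\<Sum>s'\<in>M. \<Sum>s\<in>UNIV. survive P h Term s0 n s * kernel P h s s')"
        unfolding u_def using MT by (intro sum.cong) auto
      also have "\<dots> \<ge> (\<Sum>s'\<in>M. \<Sum>s\<in>M. survive P h Term s0 n s * kernel P h s s')"
        using snn khnn by (intro sum_mono sum_mono2) auto
      also have "(\<Sum>s'\<in>M. \<Sum>s\<in>M. survive P h Term s0 n s * kernel P h s s')
          = (\<Sum>s\<in>M. survive P h Term s0 n s * (\<Sum>s'\<in>M. kernel P h s s'))"
        by (subst sum.swap) (simp add: sum_distrib_left)
      also have "\<dots> = u n"
      proof -
        have "(\<Sum>s'\<in>M. kernel P h s s') = 1" if "s \<in> M" for s
        proof -
          have "(\<Sum>s'\<in>M. kernel P h s s') = (\<Sum>s'\<in>M. P s (g s) s')"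
            using kh_M[OF that] by simp
          also have "\<dots> = (\<Sum>s'\<in>UNIV. P s (g s) s')"
          proof (rule sum.mono_neutral_left)
            show "\<forall>i\<in>UNIV - M. P s (g s) i = 0"
              using closed[OF that] Pnn by (metis DiffD2 less_eq_real_def)
          qed auto
          finally show ?thesis using Psum by simp
        qed
        then show ?thesis unfolding u_def by simp
      qed
      finally show ?thesis .
    qed
    have "incseq u" using umono by (rule incseq_SucI)
    then have ubig: "n \<ge> N \<Longrightarrow> u n \<ge> u N" for n by (simp add: incseqD)
    have sm: "summable (\<lambda>n. \<Sum>s\<in>UNIV. survive P h Term s0 n s)"
      using fin polh unfolding finite_expected_T_def by auto
    have le: "u n \<le> (\<Sum>s\<in>UNIV. survive P h Term s0 n s)" for n
      unfolding u_def using snn by (intro sum_mono2) auto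
    have "(\<lambda>n. \<Sum>s\<in>UNIV. survive P h Term s0 n s) \<longlonglongrightarrow> 0"
      by (rule summable_LIMSEQ_zero[OF sm])
    then have "eventually (\<lambda>n. (\<Sum>s\<in>UNIV. survive P h Term s0 n s) < u N) sequentially"
      using uN by (intro order_tendstoD(2)) auto
    then obtain n where "n \<ge> N" "(\<Sum>s\<in>UNIV. survive P h Term s0 n s) < u N"
      unfolding eventually_sequentially by (meson max.cobounded1 max.cobounded2)
    then show False using ubig le by (meson not_le order_trans)
  qed
  then show ?thesis using mle[of s a] unfolding D_def by simp
qed


theorem mainTheorem4:
  fixes P :: "'s::finite \<Rightarrow> 'a::finite \<Rightarrow> 's \<Rightarrow> real"
    and R :: "'s \<Rightarrow> real" and rho :: "'s \<Rightarrow> real" and Term :: "'s set" and s0 :: 's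
    and \<pi> :: "'s \<Rightarrow> 'a \<Rightarrow> real" and Qstar :: "'s \<Rightarrow> 'a \<Rightarrow> real"
  assumes elp: "is_ELP P rho Term s0"
    and pol: "is_policy \<pi>"
    and fixpt: "bellman P R Term Qstar = Qstar"
  shows "(\<forall>Q. max_lagrangian P R Term s0 \<pi> Qstar \<le> max_lagrangian P R Term s0 \<pi> Q)
    \<and> (\<forall>s a. Qstar s a \<ge> bellman P R Term Qstar s a)
    \<and> (\<forall>Q. (\<forall>s a. Q s a \<ge> bellman P R Term Q s a) \<longrightarrow>
           exit_value P \<pi> Term s0 Qstar \<le> exit_value P \<pi> Term s0 Q)"
proof -
  have part3: "exit_value P \<pi> Term s0 Qstar \<le> exit_value P \<pi> Term s0 Q"
    if feas: "\<forall>s a. Q s a \<ge> bellman P R Term Q s a" for Q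
    unfolding exit_value_def
    using exit_dist_nonneg[OF elp pol] Qstar_le[OF elp fixpt feas] pol
    unfolding is_policy_def is_dist_def
    by (intro sum_mono mult_left_mono) auto
  have bz: "bellman P R Term Qstar s a - Qstar s a = 0" for s a using fixpt by simp
  have MLq: "max_lagrangian P R Term s0 \<pi> Qstar \<le> ereal (exit_value P \<pi> Term s0 Qstar)"
    unfolding max_lagrangian_def lagrangian_def bz by (intro SUP_least) simp
  let ?L = "{lam. \<forall>s a. lam s a \<ge> (0::real)}"
  have part1: "max_lagrangian P R Term s0 \<pi> Qstar \<le> max_lagrangian P R Term s0 \<pi> Q" for Q
  proof (cases "\<forall>s a. Q s a \<ge> bellman P R Term Q s a")
    case True
    have "ereal (lagrangian P R Term s0 \<pi> Q (\<lambda>_ _. 0)) \<le> max_lagrangian P R Term s0 \<pi> Q"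
      unfolding max_lagrangian_def by (rule SUP_upper) auto
    then have "ereal (exit_value P \<pi> Term s0 Q) \<le> max_lagrangian P R Term s0 \<pi> Q"
      unfolding lagrangian_def by simp
    then show ?thesis using MLq part3[OF True] by (meson ereal_less_eq(3) order_trans)
  next
    case False
    then obtain s1 a1 where lt: "bellman P R Term Q s1 a1 > Q s1 a1" by (auto simp: not_le)
    define \<delta> where "\<delta> = bellman P R Term Q s1 a1 - Q s1 a1"
    have dpos: "\<delta> > 0" using lt unfolding \<delta>_def by simp
    define t where "t = max 0 ((exit_value P \<pi> Term s0 Qstar - exit_value P \<pi> Term s0 Q) / \<delta>)"
    define lam where "lam s a = (if s = s1 \<and> a = a1 then t else 0)" for s a
    have laml: "lam \<in> ?L" unfolding lam_def t_def by auto
    have sumeq: "(\<Sum>s\<in>UNIV. \<Sum>a\<in>UNIV. lam s a * (bellman P R Term Q s a - Q s a)) = t * \<delta>"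
    proof -
      have "(\<Sum>s\<in>UNIV. \<Sum>a\<in>UNIV. lam s a * (bellman P R Term Q s a - Q s a))
          = (\<Sum>s\<in>UNIV. if s = s1 then t * \<delta> else 0)"
      proof (intro sum.cong refl)
        fix s show "(\<Sum>a\<in>UNIV. lam s a * (bellman P R Term Q s a - Q s a)) = (if s = s1 then t * \<delta> else 0)"
        proof (cases "s = s1")
          case True
          have "(\<Sum>a\<in>UNIV. lam s a * (bellman P R Term Q s a - Q s a))
              = (\<Sum>a\<in>UNIV. if a = a1 then t * \<delta> else 0)"
            unfolding lam_def \<delta>_def using True by (intro sum.cong) auto
          then show ?thesis using True by simp
        qed (simp add: lam_def)
      qed
      then show ?thesis by simp
    qed
    have "t * \<delta> \<ge> exit_value P \<pi> Term s0 Qstar - exit_value P \<pi> Term s0 Q"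
    proof -
      have "t * \<delta> \<ge> ((exit_value P \<pi> Term s0 Qstar - exit_value P \<pi> Term s0 Q) / \<delta>) * \<delta>"
        unfolding t_def using dpos by (intro mult_right_mono) auto
      then show ?thesis using dpos by simp
    qed
    then have "exit_value P \<pi> Term s0 Qstar \<le> lagrangian P R Term s0 \<pi> Q lam"
      unfolding lagrangian_def sumeq by simp
    moreover have "ereal (lagrangian P R Term s0 \<pi> Q lam) \<le> max_lagrangian P R Term s0 \<pi> Q"
      unfolding max_lagrangian_def using laml by (rule SUP_upper)
    ultimately show ?thesis using MLq by (meson ereal_less_eq(3) order_trans)
  qed
  show ?thesis using part1 part3 fixpt by auto
qed

end
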